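(* Every $T_1$ fair topological space is a D-space.
   Context: A topological space $(X,\tau)$ is fair if for every collection $\mathcal D$ of closed discrete subsets of $X$ that is linearly ordered by inclusion (nested), if $\bigcup\mathcal D$ is discrete then $\bigcup\mathcal D$ is closed. An open neighborhood assignment is a function $N:X\to\tau$ with $x\in N(x)$ for all $x$. $X$ is a D-space if for every open neighborhood assignment $N$ there is a closed discrete $D\subseteq X$ with $\bigcup_{d\in D}N(d)=X$. *)

theory Defs
  imports "HOL-Analysis.Analysis"
begin

definition discrete_in :: "'a topology \<Rightarrow> 'a set \<Rightarrow> bool" where
  "discrete_in X D \<longleftrightarrow> D \<subseteq> topspace X \<and> subtopology X D = discrete_topology D"

definition closed_discrete_in :: "'a topology \<Rightarrow> 'a set \<Rightarrow> bool" where
  "closed_discrete_in X D \<longleftrightarrow> closedin X D \<and> discrete_in X D"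

definition fair_space :: "'a topology \<Rightarrow> bool" where
  "fair_space X \<longleftrightarrow>
     (\<forall>\<D>. (\<forall>D\<in>\<D>. closed_discrete_in X D) \<and> (\<forall>A\<in>\<D>. \<forall>B\<in>\<D>. A \<subseteq> B \<or> B \<subseteq> A)
           \<longrightarrow> discrete_in X (\<Union>\<D>) \<longrightarrow> closedin X (\<Union>\<D>))"

definition D_space :: "'a topology \<Rightarrow> bool" where
  "D_space X \<longleftrightarrow>
     (\<forall>N. (\<forall>x\<in>topspace X. openin X (N x) \<and> x \<in> N x)
          \<longrightarrow> (\<exists>D. closed_discrete_in X D \<and> (\<Union>d\<in>D. N d) = topspace X))"

end

theory Submission
  imports Defs
begin

lemma discrete_char:
  "discrete_in X D \<longleftrightarrow> D \<subseteq> topspace X \<and> (\<forall>x\<in>D. \<exists>V. openin X V \<and> x \<in> V \<and> V \<inter> D \<subseteq> {x})"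
proof -
  have "x \<notin> X derived_set_of D \<longleftrightarrow> (x \<in> topspace X \<longrightarrow> (\<exists>V. openin X V \<and> x \<in> V \<and> V \<inter> D \<subseteq> {x}))" for x
    unfolding in_derived_set_of by auto
  then have "D \<inter> X derived_set_of D = {} \<longleftrightarrow> (\<forall>x\<in>D. x \<in> topspace X \<longrightarrow> (\<exists>V. openin X V \<and> x \<in> V \<and> V \<inter> D \<subseteq> {x}))"
    by (metis disjoint_iff)
  then show ?thesis
    unfolding discrete_in_def subtopology_eq_discrete_topology_eq by (metis subsetD)
qed

lemma po_lemma: "partial_order_on A (relation_of P A) " if "\<And>D. P D D" "\<And>a b c. P a b \<Longrightarrow> P b c \<Longrightarrow> P a c"
  "\<And> a b. P a b \<Longrightarrow> P b a \<Longrightarrow> a = b"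
  unfolding partial_order_on_def preorder_on_def refl_on_def trans_def antisym_def relation_of_def
  using that by auto

theorem mainTheorem3:
  fixes X :: "'a topology"
  assumes "t1_space X" and "fair_space X"
  shows "D_space X"
  unfolding D_space_def
proof (intro allI impI)
  fix N assume N: "\<forall>x\<in>topspace X. openin X (N x) \<and> x \<in> N x"
  define U where "U D = (\<Union>d\<in>D. N d)" for D
  define A where "A = {D. closed_discrete_in X D}"
  define P where "P D E \<longleftrightarrow> D \<subseteq> E \<and> (E - D) \<inter> U D = {}" for D E
  have po: "partial_order_on A (relation_of P A)"
  proof (rule po_lemma)
    fix a b c assume "P a b" "P b c"
    then have "a \<subseteq> b" "(b - a) \<inter> U a = {}" "b \<subseteq> c" "(c - b) \<inter> U b = {}" unfolding P_def by auto
    moreover have "U a \<subseteq> U b" using \<open>a \<subseteq> b\<close> unfolding U_def by auto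
    ultimately show "P a c" unfolding P_def by blast
  qed (auto simp: P_def)
  have ch: "\<exists>u \<in> A. \<forall>a \<in> C. P a u" if C: "C \<in> Chains (relation_of P A)" for C
  proof -
    have CA: "C \<subseteq> A" and cmp: "\<And>a b. a \<in> C \<Longrightarrow> b \<in> C \<Longrightarrow> P a b \<or> P b a"
      using C unfolding Chains_def relation_of_def by auto
    have up: "P a (\<Union>C)" if "a \<in> C" for a
    proof -
      have "(b - a) \<inter> U a = {}" if "b \<in> C" for b
        using cmp[OF \<open>a \<in> C\<close> that] unfolding P_def by auto
      then show ?thesis using that unfolding P_def by auto
    qed
    have disc: "discrete_in X (\<Union>C)"
      unfolding discrete_char
    proof
      show "\<Union>C \<subseteq> topspace X" using CA unfolding A_def closed_discrete_in_def discrete_char by auto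
      show "\<forall>x\<in>\<Union>C. \<exists>V. openin X V \<and> x \<in> V \<and> V \<inter> \<Union>C \<subseteq> {x}"
      proof
        fix x assume "x \<in> \<Union>C"
        then obtain a where a: "a \<in> C" "x \<in> a" by auto
        then have "closed_discrete_in X a" using CA unfolding A_def by auto
        then obtain V where V: "openin X V" "x \<in> V" "V \<inter> a \<subseteq> {x}" "a \<subseteq> topspace X"
          using a unfolding closed_discrete_in_def discrete_char by blast
        have Nx: "openin X (N x)" "x \<in> N x" using N V a by auto
        have "(\<Union>C - a) \<inter> U a = {}" using up[OF a(1)] unfolding P_def by auto
        moreover have "N x \<subseteq> U a" using a unfolding U_def by auto
        ultimately have "V \<inter> N x \<inter> \<Union>C \<subseteq> {x}" using V by blast
        then show "\<exists>V. openin X V \<and> x \<in> V \<and> V \<inter> \<Union>C \<subseteq> {x}"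
          using V Nx by (intro exI[of _ "V \<inter> N x"]) auto
      qed
    qed
    have "\<forall>D\<in>C. closed_discrete_in X D" using CA unfolding A_def by auto
    moreover have "\<forall>a\<in>C. \<forall>b\<in>C. a \<subseteq> b \<or> b \<subseteq> a"
    proof (intro ballI)
      fix a b assume "a \<in> C" "b \<in> C"
      from cmp[OF this] show "a \<subseteq> b \<or> b \<subseteq> a" unfolding P_def by auto
    qed
    moreover note spec[OF assms(2)[unfolded fair_space_def], of C]
    ultimately have "closedin X (\<Union>C)" using disc by blast
    then have "\<Union>C \<in> A" using disc unfolding A_def closed_discrete_in_def by auto
    then show ?thesis using up by blast
  qed
  obtain D where D: "D \<in> A" and max: "\<And>E. E \<in> A \<Longrightarrow> P D E \<Longrightarrow> E = D"
    using predicate_Zorn[OF po ch] by blast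
  have Dcd: "closedin X D" "discrete_in X D" using D unfolding A_def closed_discrete_in_def by auto
  have DX: "D \<subseteq> topspace X" using Dcd(2) unfolding discrete_char by auto
  have UX: "U D \<subseteq> topspace X" using N DX unfolding U_def by (auto dest: openin_subset)
  have DU: "D \<subseteq> U D" using N DX unfolding U_def by auto
  have "U D = topspace X"
  proof (rule ccontr)
    assume "U D \<noteq> topspace X"
    then obtain x where x: "x \<in> topspace X" "x \<notin> U D" using UX by auto
    have xD: "x \<notin> D" using x DU by auto
    define E where "E = insert x D"
    have cx: "closedin X {x}" using assms(1) x by (simp add: t1_space_closedin_singleton)
    have "closedin X E" unfolding E_def using closedin_Un[OF cx Dcd(1)] by simp
    moreover have "discrete_in X E"
      unfolding discrete_char
    proof
      show "E \<subseteq> topspace X" using x DX unfolding E_def by auto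
      show "\<forall>y\<in>E. \<exists>V. openin X V \<and> y \<in> V \<and> V \<inter> E \<subseteq> {y}"
      proof
        fix y assume "y \<in> E"
        show "\<exists>V. openin X V \<and> y \<in> V \<and> V \<inter> E \<subseteq> {y}"
        proof (cases "y = x")
          case True
          have "openin X (topspace X - D)" using Dcd(1) by blast
          then show ?thesis using True x xD unfolding E_def by (intro exI[of _ "topspace X - D"]) auto
        next
          case False
          then have yD: "y \<in> D" using \<open>y \<in> E\<close> unfolding E_def by auto
          then obtain V where V: "openin X V" "y \<in> V" "V \<inter> D \<subseteq> {y}"
            using Dcd(2) unfolding discrete_char by blast
          have "openin X (topspace X - {x})" using cx by blast
          then show ?thesis using V False yD DX unfolding E_def
            by (intro exI[of _ "V \<inter> (topspace X - {x})"]) (auto dest: openin_subset)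
        qed
      qed
    qed
    ultimately have "E \<in> A" unfolding A_def closed_discrete_in_def by auto
    moreover have "P D E" unfolding P_def E_def using x by auto
    ultimately have "E = D" using max by blast
    then show False using xD unfolding E_def by auto
  qed
  then show "\<exists>D. closed_discrete_in X D \<and> (\<Union>d\<in>D. N d) = topspace X"
    using D unfolding A_def U_def by auto
qed

end
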